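(* Let $n\ge 1$, $m\ge 2$, $0\le k\le n-1$ with $(m,k)\ne(2,0)$. Then the class $\mathcal{C}^k_{ac}$ of all complete $k$-bounded acyclic CP-nets over $n$ variables of domain size $m$, over the instance space $\mathcal{X}_{swap}$ (for any admissible choice of $\mathcal{X}_{swap}$), is not intersection-closed.
   Context: Variables $V=\{v_1,\dots,v_n\}$, each with a finite domain of size $m$. An outcome assigns a value to every variable; $\mathcal{O}_X$ denotes assignments to $X\subseteq V$. A complete CP-net specifies for each $v_i$ a parent set $Pa(v_i)\subseteq V\setminus\{v_i\}$ and, for each context $\gamma\in\mathcal{O}_{Pa(v_i)}$, a strict total order $\succ^{v_i}_\gamma$ on $D_{v_i}$; parents are non-dummy. Acyclic: graph with edges $(v_j,v_i)$, $v_j\in Pa(v_i)$, acyclic; $k$-bounded: all $|Pa(v_i)|\le k$. Improving flip: changing only $v_i$ to a value preferred under $\succ^{v_i}_{o[Pa(v_i)]}$; $o'\succ o$ iff a nonempty sequence of improving flips leads from $o$ to $o'$. A swap is an ordered pair $x=(x.1,x.2)$ of outcomes differing in exactly one variable; $\mathcal{X}_{swap}$ is any set containing exactly one of the two orderings of each such pair (an admissible choice). A CP-net $N$ is the concept $c_N=\{x\in\mathcal{X}_{swap}: x.1\succ x.2\text{ under }N\}$. A class $\mathcal{C}$ of concepts (subsets of the instance space) is intersection-closed if $c\cap c'\in\mathcal{C}$ for all $c,c'\in\mathcal{C}$. *)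

theory Defs
  imports Main
begin

definition outcomes :: "nat \<Rightarrow> nat \<Rightarrow> (nat \<Rightarrow> nat) set" where
  "outcomes n m = {u. (\<forall>i<n. u i < m) \<and> (\<forall>i\<ge>n. u i = 0)}"

text \<open>A CP-net: parent sets and conditional preference tables.
  cpt i \<gamma> a b means: value a is preferred to value b for variable i
  in the context \<gamma> (an assignment to the parents of i, extended by 0).\<close>
type_synonym cpnet = "(nat \<Rightarrow> nat set) \<times> (nat \<Rightarrow> (nat \<Rightarrow> nat) \<Rightarrow> nat \<Rightarrow> nat \<Rightarrow> bool)"

definition ctx :: "(nat \<Rightarrow> nat set) \<Rightarrow> nat \<Rightarrow> (nat \<Rightarrow> nat) \<Rightarrow> (nat \<Rightarrow> nat)" where
  "ctx Pa i u = (\<lambda>j. if j \<in> Pa i then u j else 0)"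

definition strict_total_on :: "nat set \<Rightarrow> (nat \<Rightarrow> nat \<Rightarrow> bool) \<Rightarrow> bool" where
  "strict_total_on D R \<longleftrightarrow>
     (\<forall>a\<in>D. \<not> R a a) \<and>
     (\<forall>a\<in>D. \<forall>b\<in>D. \<forall>c\<in>D. R a b \<longrightarrow> R b c \<longrightarrow> R a c) \<and>
     (\<forall>a\<in>D. \<forall>b\<in>D. a \<noteq> b \<longrightarrow> R a b \<or> R b a)"

text \<open>Complete, k-bounded, acyclic CP-net over n variables with domain size m,
  all parents non-dummy.\<close>
definition cpnet_ac :: "nat \<Rightarrow> nat \<Rightarrow> nat \<Rightarrow> cpnet \<Rightarrow> bool" where
  "cpnet_ac n m k N \<longleftrightarrow> (let Pa = fst N; cpt = snd N in
     (\<forall>i<n. Pa i \<subseteq> {0..<n} - {i}) \<and>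
     (\<forall>i<n. card (Pa i) \<le> k) \<and>
     acyclic {(j, i). i < n \<and> j \<in> Pa i} \<and>
     (\<forall>i<n. \<forall>u\<in>outcomes n m. strict_total_on {0..<m} (cpt i (ctx Pa i u))) \<and>
     (\<forall>i<n. \<forall>j\<in>Pa i. \<exists>u\<in>outcomes n m. \<exists>a<m. \<exists>x<m. \<exists>y<m.
         cpt i (ctx Pa i u) x y \<noteq> cpt i (ctx Pa i (u(j := a))) x y))"

definition flips :: "nat \<Rightarrow> nat \<Rightarrow> cpnet \<Rightarrow> ((nat \<Rightarrow> nat) \<times> (nat \<Rightarrow> nat)) set" where
  "flips n m N = {(u, u'). u \<in> outcomes n m \<and> u' \<in> outcomes n m \<and>
     (\<exists>i<n. (\<forall>j. j \<noteq> i \<longrightarrow> u' j = u j) \<and> snd N i (ctx (fst N) i u) (u' i) (u i))}"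

definition dominates :: "nat \<Rightarrow> nat \<Rightarrow> cpnet \<Rightarrow> (nat \<Rightarrow> nat) \<Rightarrow> (nat \<Rightarrow> nat) \<Rightarrow> bool" where
  "dominates n m N u' u \<longleftrightarrow> (u, u') \<in> (flips n m N)\<^sup>+"

definition swaps :: "nat \<Rightarrow> nat \<Rightarrow> ((nat \<Rightarrow> nat) \<times> (nat \<Rightarrow> nat)) set" where
  "swaps n m = {(a, b). a \<in> outcomes n m \<and> b \<in> outcomes n m \<and> card {i. a i \<noteq> b i} = 1}"

definition admissible_swap_space :: "nat \<Rightarrow> nat \<Rightarrow> ((nat \<Rightarrow> nat) \<times> (nat \<Rightarrow> nat)) set \<Rightarrow> bool" where
  "admissible_swap_space n m X \<longleftrightarrow> X \<subseteq> swaps n m \<and>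
     (\<forall>a b. (a, b) \<in> swaps n m \<longrightarrow> ((a, b) \<in> X \<longleftrightarrow> (b, a) \<notin> X))"

definition concept :: "nat \<Rightarrow> nat \<Rightarrow> ((nat \<Rightarrow> nat) \<times> (nat \<Rightarrow> nat)) set \<Rightarrow> cpnet
    \<Rightarrow> ((nat \<Rightarrow> nat) \<times> (nat \<Rightarrow> nat)) set" where
  "concept n m X N = {x \<in> X. dominates n m N (fst x) (snd x)}"

definition class_ac :: "nat \<Rightarrow> nat \<Rightarrow> nat \<Rightarrow> ((nat \<Rightarrow> nat) \<times> (nat \<Rightarrow> nat)) set
    \<Rightarrow> ((nat \<Rightarrow> nat) \<times> (nat \<Rightarrow> nat)) set set" where
  "class_ac n m k X = {concept n m X N | N. cpnet_ac n m k N}"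

definition intersection_closed :: "'a set set \<Rightarrow> bool" where
  "intersection_closed C \<longleftrightarrow> (\<forall>c\<in>C. \<forall>c'\<in>C. c \<inter> c' \<in> C)"

end

theory Submission
  imports Defs
begin


definition dep :: "(nat \<Rightarrow> nat set) \<Rightarrow> nat \<Rightarrow> (nat \<times> nat) set" where
  "dep Pa n = {(j,i). i<n \<and> j \<in> Pa i}"

lemma outcomes_lt: "u \<in> outcomes n m \<Longrightarrow> i < n \<Longrightarrow> u i < m"
  by (simp add: outcomes_def)

lemma ctx_eq: "(\<forall>j\<in>Pa i. u j = v j) \<Longrightarrow> ctx Pa i u = ctx Pa i v"
  by (auto simp: ctx_def)

lemma ac_D0:
  assumes "cpnet_ac n m k (Pa, cpt)"
  shows "(\<forall>i<n. Pa i \<subseteq> {0..<n} - {i}) \<and> acyclic (dep Pa n) \<and>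
    (\<forall>i<n. \<forall>u\<in>outcomes n m. strict_total_on {0..<m} (cpt i (ctx Pa i u)))"
proof -
  have "(\<forall>i<n. Pa i \<subseteq> {0..<n} - {i}) \<and>
     (\<forall>i<n. card (Pa i) \<le> k) \<and>
     acyclic {(j, i). i < n \<and> j \<in> Pa i} \<and>
     (\<forall>i<n. \<forall>u\<in>outcomes n m. strict_total_on {0..<m} (cpt i (ctx Pa i u))) \<and>
     (\<forall>i<n. \<forall>j\<in>Pa i. \<exists>u\<in>outcomes n m. \<exists>a<m. \<exists>x<m. \<exists>y<m.
         cpt i (ctx Pa i u) x y \<noteq> cpt i (ctx Pa i (u(j := a))) x y)"
    using assms unfolding cpnet_ac_def Let_def fst_conv snd_conv .
  then show ?thesis unfolding dep_def by (elim conjE) (intro conjI)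
qed

lemma ac_D:
  assumes "cpnet_ac n m k (Pa, cpt)"
  shows "\<And>i. i<n \<Longrightarrow> Pa i \<subseteq> {0..<n} - {i}"
    and "acyclic (dep Pa n)"
    and "\<And>i u. i<n \<Longrightarrow> u\<in>outcomes n m \<Longrightarrow> strict_total_on {0..<m} (cpt i (ctx Pa i u))"
  using ac_D0[OF assms] by blast+

lemma st_irrefl: "strict_total_on {0..<m} R \<Longrightarrow> a < m \<Longrightarrow> \<not> R a a"
  unfolding strict_total_on_def by (meson atLeastLessThan_iff zero_le)
lemma st_trans: "strict_total_on {0..<m} R \<Longrightarrow> a < m \<Longrightarrow> b < m \<Longrightarrow> c < m \<Longrightarrow> R a b \<Longrightarrow> R b c \<Longrightarrow> R a c"
  unfolding strict_total_on_def by (meson atLeastLessThan_iff zero_le)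
lemma st_total: "strict_total_on {0..<m} R \<Longrightarrow> a < m \<Longrightarrow> b < m \<Longrightarrow> a \<noteq> b \<Longrightarrow> R a b \<or> R b a"
  unfolding strict_total_on_def by (meson atLeastLessThan_iff zero_le)

lemma flips_D:
  assumes "(u, v) \<in> flips n m (Pa, cpt)"
  obtains i where "i < n" "u \<in> outcomes n m" "v \<in> outcomes n m" "\<forall>j. j \<noteq> i \<longrightarrow> v j = u j"
     "cpt i (ctx Pa i u) (v i) (u i)"
proof -
  have "u \<in> outcomes n m \<and> v \<in> outcomes n m \<and>
     (\<exists>i<n. (\<forall>j. j \<noteq> i \<longrightarrow> v j = u j) \<and> cpt i (ctx Pa i u) (v i) (u i))"
    using assms unfolding flips_def by simp
  then obtain i where "i < n" "u \<in> outcomes n m" "v \<in> outcomes n m" "\<forall>j. j \<noteq> i \<longrightarrow> v j = u j"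
     "cpt i (ctx Pa i u) (v i) (u i)" by blast
  then show thesis using that by blast
qed

lemma dep_par: "i < n \<Longrightarrow> j \<in> Pa i \<Longrightarrow> (j, i) \<in> (dep Pa n)\<^sup>+"
  unfolding dep_def by auto

lemma flips_key:
  assumes ac: "cpnet_ac n m k (Pa, cpt)"
    and "(u, v) \<in> (flips n m (Pa, cpt))\<^sup>+"
  shows "\<exists>i<n. u \<in> outcomes n m \<and> v \<in> outcomes n m \<and> u i \<noteq> v i \<and>
     (\<forall>j. (j,i) \<in> (dep Pa n)\<^sup>+ \<longrightarrow> u j = v j) \<and> cpt i (ctx Pa i u) (v i) (u i)"
  using assms(2)
proof (induction rule: trancl_induct)
  case (base y)
  then obtain i where i: "i < n" "u \<in> outcomes n m" "y \<in> outcomes n m" "\<forall>j. j \<noteq> i \<longrightarrow> y j = u j"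
     "cpt i (ctx Pa i u) (y i) (u i)" by (rule flips_D)
  have st: "strict_total_on {0..<m} (cpt i (ctx Pa i u))" using ac_D(3)[OF ac i(1,2)] .
  have "u i \<noteq> y i" using st_irrefl[OF st outcomes_lt[OF i(2,1)]] i(5) by metis
  moreover have "\<forall>j. (j,i) \<in> (dep Pa n)\<^sup>+ \<longrightarrow> u j = y j"
  proof (intro allI impI)
    fix j assume "(j,i) \<in> (dep Pa n)\<^sup>+"
    then have "j \<noteq> i" using ac_D(2)[OF ac] unfolding acyclic_def by blast
    then show "u j = y j" using i(4) by simp
  qed
  ultimately show ?case using i by blast
next
  case (step y z)
  then obtain i where i: "i<n" "u \<in> outcomes n m" "y \<in> outcomes n m" "u i \<noteq> y i"
     "\<forall>j. (j,i) \<in> (dep Pa n)\<^sup>+ \<longrightarrow> u j = y j" "cpt i (ctx Pa i u) (y i) (u i)" by blast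
  obtain l where l: "l < n" "y \<in> outcomes n m" "z \<in> outcomes n m" "\<forall>j. j \<noteq> l \<longrightarrow> z j = y j"
     "cpt l (ctx Pa l y) (z l) (y l)" using step(2) by (rule flips_D)
  have acy: "\<And>j. (j, j) \<notin> (dep Pa n)\<^sup>+" using ac_D(2)[OF ac] unfolding acyclic_def by blast
  have stl: "strict_total_on {0..<m} (cpt l (ctx Pa l y))" using ac_D(3)[OF ac l(1,2)] .
  have yz: "y l \<noteq> z l" using st_irrefl[OF stl outcomes_lt[OF l(2,1)]] l(5) by metis
  show ?case
  proof (cases "l = i")
    case True
    have cx: "ctx Pa i y = ctx Pa i u"
      using i(5) dep_par[OF i(1)] by (intro ctx_eq) auto
    have st: "strict_total_on {0..<m} (cpt i (ctx Pa i u))" using ac_D(3)[OF ac i(1,2)] .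
    have lt: "u i < m" "y i < m" "z i < m" using outcomes_lt i l by auto
    have c1: "cpt i (ctx Pa i u) (z i) (y i)" using l(5) True cx by simp
    have c2: "cpt i (ctx Pa i u) (z i) (u i)" using st_trans[OF st lt(3,2,1) c1 i(6)] .
    have "z i \<noteq> u i" using c2 st_irrefl[OF st lt(1)] by metis
    moreover have "\<forall>j. (j,i) \<in> (dep Pa n)\<^sup>+ \<longrightarrow> u j = z j"
    proof (intro allI impI)
      fix j assume a: "(j,i) \<in> (dep Pa n)\<^sup>+"
      then have "j \<noteq> i" using acy by blast
      then show "u j = z j" using i(5) l(4) True a by simp
    qed
    ultimately show ?thesis using i l c2 by auto
  next
    case False
    show ?thesis
    proof (cases "(l, i) \<in> (dep Pa n)\<^sup>+")
      case True
      have ul: "u l = y l" using i(5) True by blast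
      have anc: "\<forall>j. (j,l) \<in> (dep Pa n)\<^sup>+ \<longrightarrow> u j = z j"
      proof (intro allI impI)
        fix j assume a: "(j,l) \<in> (dep Pa n)\<^sup>+"
        then have "j \<noteq> l" using acy by blast
        moreover have "(j,i) \<in> (dep Pa n)\<^sup>+" using a True by (rule trancl_trans)
        ultimately show "u j = z j" using i(5) l(4) by simp
      qed
      have "\<forall>j\<in>Pa l. y j = u j"
      proof
        fix j assume a: "j \<in> Pa l"
        then have "(j,l) \<in> (dep Pa n)\<^sup>+" using dep_par[OF l(1)] by blast
        moreover have "j \<noteq> l" using a ac_D(1)[OF ac l(1)] by blast
        ultimately show "y j = u j" using anc l(4) by simp
      qed
      then have cx: "ctx Pa l y = ctx Pa l u" by (rule ctx_eq)
      show ?thesis using l(1) i(2) l(3) ul yz anc l(5) cx by auto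
    next
      case F2: False
      have "\<forall>j. (j,i) \<in> (dep Pa n)\<^sup>+ \<longrightarrow> u j = z j"
        using i(5) l(4) F2 by auto
      moreover have "z i = y i" using l(4) False by metis
      ultimately show ?thesis using i l by auto
    qed
  qed
qed

lemma flips_irrefl:
  assumes ac: "cpnet_ac n m k N"
  shows "(u, u) \<notin> (flips n m N)\<^sup>+"
proof
  assume "(u, u) \<in> (flips n m N)\<^sup>+"
  moreover obtain Pa cpt where N: "N = (Pa, cpt)" by fastforce
  ultimately show False using flips_key[of n m k Pa cpt u u] ac by auto
qed


lemma ac_Dg:
  assumes "cpnet_ac n m k N"
  shows "\<And>i. i<n \<Longrightarrow> fst N i \<subseteq> {0..<n} - {i}"
    and "acyclic (dep (fst N) n)"
    and "\<And>i u. i<n \<Longrightarrow> u\<in>outcomes n m \<Longrightarrow> strict_total_on {0..<m} (snd N i (ctx (fst N) i u))"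
  using ac_D[of n m k "fst N" "snd N"] assms by auto

definition P :: "cpnet \<Rightarrow> nat \<Rightarrow> (nat \<Rightarrow> nat) \<Rightarrow> (nat \<Rightarrow> nat) \<Rightarrow> bool" where
  "P N i a b = snd N i (ctx (fst N) i b) (a i) (b i)"

lemma ctx_swap:
  assumes "cpnet_ac n m k N" "i < n" "\<forall>j. j \<noteq> i \<longrightarrow> a j = b j"
  shows "ctx (fst N) i a = ctx (fst N) i b"
proof (rule ctx_eq, rule ballI)
  fix j assume "j \<in> fst N i"
  then have "j \<noteq> i" using ac_Dg(1)[OF assms(1,2)] by blast
  then show "a j = b j" using assms(3) by simp
qed

lemma P_anti:
  assumes ac: "cpnet_ac n m k N" and ab: "a \<in> outcomes n m" "b \<in> outcomes n m" "i < n" "a i \<noteq> b i"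
    "\<forall>j. j \<noteq> i \<longrightarrow> a j = b j"
  shows "P N i a b \<longleftrightarrow> \<not> P N i b a"
proof -
  have cx: "ctx (fst N) i a = ctx (fst N) i b" using ctx_swap[OF ac ab(3,5)] .
  have st: "strict_total_on {0..<m} (snd N i (ctx (fst N) i b))" using ac_Dg(3)[OF ac ab(3,2)] .
  have lt: "a i < m" "b i < m" using outcomes_lt ab by auto
  have t: "snd N i (ctx (fst N) i b) (a i) (b i) \<or> snd N i (ctx (fst N) i b) (b i) (a i)"
    using st_total[OF st lt ab(4)] .
  have as: "\<not> (snd N i (ctx (fst N) i b) (a i) (b i) \<and> snd N i (ctx (fst N) i b) (b i) (a i))"
    using st_trans[OF st lt(1,2,1)] st_irrefl[OF st lt(1)] by blast
  show ?thesis unfolding P_def using cx t as by auto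
qed

lemma P_flip:
  assumes ac: "cpnet_ac n m k N" and ab: "a \<in> outcomes n m" "b \<in> outcomes n m" "i < n" "a i \<noteq> b i"
    "\<forall>j. j \<noteq> i \<longrightarrow> a j = b j"
  shows "(b, a) \<in> flips n m N \<longleftrightarrow> P N i a b"
proof
  assume "(b, a) \<in> flips n m N"
  then obtain l where l: "l < n" "\<forall>j. j \<noteq> l \<longrightarrow> a j = b j" "snd N l (ctx (fst N) l b) (a l) (b l)"
    unfolding flips_def by blast
  have "l = i" using l(2) ab(4) by metis
  then show "P N i a b" unfolding P_def using l(3) by simp
next
  assume "P N i a b"
  then show "(b, a) \<in> flips n m N" unfolding flips_def P_def using ab by auto
qed

lemma P_dom:
  assumes ac: "cpnet_ac n m k N" and ab: "a \<in> outcomes n m" "b \<in> outcomes n m" "i < n" "a i \<noteq> b i"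
    "\<forall>j. j \<noteq> i \<longrightarrow> a j = b j"
  shows "dominates n m N a b \<longleftrightarrow> P N i a b"
proof
  assume d: "dominates n m N a b"
  show "P N i a b"
  proof (rule ccontr)
    assume "\<not> P N i a b"
    then have "P N i b a" using P_anti[OF ac ab] by blast
    moreover have ab': "\<forall>j. j \<noteq> i \<longrightarrow> b j = a j" "b i \<noteq> a i" using ab by auto
    ultimately have "(a, b) \<in> flips n m N" using P_flip[OF ac ab(2,1,3) ab'(2,1)] by blast
    moreover have "(b, a) \<in> (flips n m N)\<^sup>+" using d unfolding dominates_def .
    ultimately have "(b, b) \<in> (flips n m N)\<^sup>+" by (meson trancl_into_trancl)
    then show False using flips_irrefl[OF ac] by blast
  qed
next
  assume "P N i a b"
  then have "(b, a) \<in> flips n m N" using P_flip[OF ac ab] by blast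
  then show "dominates n m N a b" unfolding dominates_def by blast
qed

lemma P_concept:
  assumes ac: "cpnet_ac n m k N" and ab: "a \<in> outcomes n m" "b \<in> outcomes n m" "i < n" "a i \<noteq> b i"
    "\<forall>j. j \<noteq> i \<longrightarrow> a j = b j" and X: "(a, b) \<in> X"
  shows "(a, b) \<in> concept n m X N \<longleftrightarrow> P N i a b"
  using P_dom[OF ac ab] X unfolding concept_def by auto

lemma forced:
  assumes ac: "cpnet_ac n m k N" "cpnet_ac n m k N1" "cpnet_ac n m k N2"
    and eq: "concept n m X N = concept n m X N1 \<inter> concept n m X N2"
    and ab: "a \<in> outcomes n m" "b \<in> outcomes n m" "i < n" "a i \<noteq> b i"
    "\<forall>j. j \<noteq> i \<longrightarrow> a j = b j" and X: "(a, b) \<in> X"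
  shows "P N i a b \<longleftrightarrow> P N1 i a b \<and> P N2 i a b"
  using P_concept[OF ac(1) ab X] P_concept[OF ac(2) ab X] P_concept[OF ac(3) ab X] eq by blast

lemma X_or:
  assumes adm: "admissible_swap_space n m X" and ab: "a \<in> outcomes n m" "b \<in> outcomes n m" "a i \<noteq> b i"
    "\<forall>j. j \<noteq> i \<longrightarrow> a j = b j"
  shows "(a, b) \<in> X \<or> (b, a) \<in> X"
proof -
  have "{j. a j \<noteq> b j} = {i}" using ab(3,4) by auto
  then have "(a, b) \<in> swaps n m" unfolding swaps_def using ab by simp
  then show ?thesis using adm unfolding admissible_swap_space_def by blast
qed



definition rk :: "nat list \<Rightarrow> nat \<Rightarrow> nat" where "rk l x = (if x < 3 then l ! x else x)"
definition goodl :: "nat list \<Rightarrow> bool" where "goodl l = (distinct l \<and> set l = {0,1,2})"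
definition netL :: "nat list \<Rightarrow> cpnet" where
  "netL l = (\<lambda>i. {}, \<lambda>i \<gamma> x y. if i = 0 then rk l x < rk l y else x < y)"
definition o1 :: "nat \<Rightarrow> nat \<Rightarrow> nat" where "o1 v = (\<lambda>j. if j = 0 then v else 0)"

lemma rk_inj:
  assumes "goodl l" "rk l x = rk l y" shows "x = y"
proof -
  have d: "distinct l" and s: "set l = {0,1,2}" using assms(1) unfolding goodl_def by auto
  have len: "length l = 3" using distinct_card[OF d] s by simp
  have lt: "l ! z < 3" if "z < 3" for z
  proof -
    have "l ! z \<in> set l" using that len by simp
    then show ?thesis using s by auto
  qed
  show ?thesis
  proof (cases "x < 3")
    case True
    show ?thesis
    proof (cases "y < 3")
      case True
      have "l ! x = l ! y" using \<open>x < 3\<close> True assms(2) unfolding rk_def by simp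
      then show ?thesis using nth_eq_iff_index_eq[OF d, of x y] len \<open>x < 3\<close> True by simp
    next
      case False
      have "l ! x = y" using \<open>x < 3\<close> False assms(2) unfolding rk_def by simp
      then show ?thesis using lt[OF \<open>x < 3\<close>] False by simp
    qed
  next
    case False
    show ?thesis
    proof (cases "y < 3")
      case True
      have "x = l ! y" using False True assms(2) unfolding rk_def by simp
      then show ?thesis using lt[OF True] False by simp
    next
      case F2: False
      then show ?thesis using False assms(2) unfolding rk_def by simp
    qed
  qed
qed
lemma st_rank: "inj_on f D \<Longrightarrow> strict_total_on D (\<lambda>x y. (f x :: nat) < f y)"
  unfolding strict_total_on_def inj_on_def by (metis less_irrefl less_trans nat_neq_iff)

lemma netL_ac: assumes "goodl l" shows "cpnet_ac n m k (netL l)"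
proof -
  have e: "{(j, i). i < n \<and> j \<in> ({}::nat set)} = {}" by simp
  have a: "acyclic ({} :: (nat \<times> nat) set)" unfolding acyclic_def by simp
  have s1: "strict_total_on {0..<m} (\<lambda>x y. rk l x < rk l y)"
    by (rule st_rank) (meson inj_onI rk_inj assms)
  have s2: "strict_total_on {0..<m} (\<lambda>x y. x < y)"
    using st_rank[of "\<lambda>x. x" "{0..<m}"] by simp
  have s3: "strict_total_on {0..<m} (\<lambda>x y. if i = 0 then rk l x < rk l y else x < y)" for i
    using s1 s2 by (cases "i = 0") simp_all
  show ?thesis unfolding cpnet_ac_def Let_def netL_def fst_conv snd_conv e
    apply (intro conjI allI impI ballI)
        apply simp
       apply simp
      apply (rule a)
     apply (rule s3)
    apply simp
    done
qed

lemma P_netL: "P (netL l) 0 a b \<longleftrightarrow> rk l (a 0) < rk l (b 0)"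
  unfolding P_def netL_def by simp

definition Fd :: "(nat \<Rightarrow> nat \<Rightarrow> bool) \<Rightarrow> (nat \<Rightarrow> nat \<Rightarrow> bool) \<Rightarrow> nat list \<Rightarrow> nat list \<Rightarrow> nat \<Rightarrow> nat \<Rightarrow> bool" where
  "Fd q S l1 l2 x y = (if q x y then (S x y \<longleftrightarrow> rk l1 x < rk l1 y \<and> rk l2 x < rk l2 y)
      else (S y x \<longleftrightarrow> rk l1 y < rk l1 x \<and> rk l2 y < rk l2 x))"

lemma core_case:
  assumes "goodl l1" "goodl l2"
    "\<And>S. (S 0 1 \<or> S 1 0) \<Longrightarrow> (S 1 2 \<or> S 2 1) \<Longrightarrow> (S 0 2 \<or> S 2 0) \<Longrightarrow>
       \<not>(S 0 1 \<and> S 1 2 \<and> S 2 0) \<Longrightarrow> \<not>(S 1 0 \<and> S 2 1 \<and> S 0 2) \<Longrightarrow>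
       \<not> (Fd q S l1 l2 0 1 \<and> Fd q S l1 l2 1 2 \<and> Fd q S l1 l2 0 2)"
  shows "\<exists>l1 l2. goodl l1 \<and> goodl l2 \<and> (\<forall>S. strict_total_on {0..<m} S \<longrightarrow> 3 \<le> m \<longrightarrow>
     \<not> (Fd q S l1 l2 0 1 \<and> Fd q S l1 l2 1 2 \<and> Fd q S l1 l2 0 2))"
proof (intro exI conjI allI impI)
  show "goodl l1" "goodl l2" by fact+
  fix S :: "nat \<Rightarrow> nat \<Rightarrow> bool" assume st: "strict_total_on {0..<m} S" and m: "3 \<le> m"
  have lt: "0 < m" "1 < m" "2 < m" using m by auto
  have t1: "S 0 1 \<or> S 1 0" by (rule st_total[OF st lt(1) lt(2)]) simp
  have t2: "S 1 2 \<or> S 2 1" by (rule st_total[OF st lt(2) lt(3)]) simp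
  have t3: "S 0 2 \<or> S 2 0" by (rule st_total[OF st lt(1) lt(3)]) simp
  have c1: "\<not>(S 0 1 \<and> S 1 2 \<and> S 2 0)"
  proof
    assume h: "S 0 1 \<and> S 1 2 \<and> S 2 0"
    then have "S 0 2" using st_trans[OF st lt(1) lt(2) lt(3)] by blast
    then have "S 0 0" using h st_trans[OF st lt(1) lt(3) lt(1)] by blast
    then show False using st_irrefl[OF st lt(1)] by blast
  qed
  have c2: "\<not>(S 1 0 \<and> S 2 1 \<and> S 0 2)"
  proof
    assume h: "S 1 0 \<and> S 2 1 \<and> S 0 2"
    then have "S 1 2" using st_trans[OF st lt(2) lt(1) lt(3)] by blast
    then have "S 1 1" using h st_trans[OF st lt(2) lt(3) lt(2)] by blast
    then show False using st_irrefl[OF st lt(2)] by blast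
  qed
  show "\<not> (Fd q S l1 l2 0 1 \<and> Fd q S l1 l2 1 2 \<and> Fd q S l1 l2 0 2)" by (rule assms(3)[OF t1 t2 t3 c1 c2])
qed

lemma core3:
  fixes q :: "nat \<Rightarrow> nat \<Rightarrow> bool"
  shows "\<exists>l1 l2. goodl l1 \<and> goodl l2 \<and> (\<forall>S. strict_total_on {0..<m} S \<longrightarrow> 3 \<le> m \<longrightarrow>
     \<not> (Fd q S l1 l2 0 1 \<and> Fd q S l1 l2 1 2 \<and> Fd q S l1 l2 0 2))"
proof (cases "q 0 1"; cases "q 1 2"; cases "q 0 2")
  assume "q 0 1" "q 1 2" "q 0 2"
  then show ?thesis apply - apply (rule core_case[of "[0,2,1]" "[1,0,2]"]) apply (auto simp: goodl_def)[1] apply (auto simp: goodl_def)[1] by (simp add: Fd_def rk_def, blast?)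
next
  assume "q 0 1" "q 1 2" "\<not> q 0 2"
  then show ?thesis apply - apply (rule core_case[of "[0,1,2]" "[2,1,0]"]) apply (auto simp: goodl_def)[1] apply (auto simp: goodl_def)[1] by (simp add: Fd_def rk_def, blast?)
next
  assume "q 0 1" "\<not> q 1 2" "q 0 2"
  then show ?thesis apply - apply (rule core_case[of "[0,1,2]" "[1,2,0]"]) apply (auto simp: goodl_def)[1] apply (auto simp: goodl_def)[1] by (simp add: Fd_def rk_def, blast?)
next
  assume "q 0 1" "\<not> q 1 2" "\<not> q 0 2"
  then show ?thesis apply - apply (rule core_case[of "[2,1,0]" "[0,2,1]"]) apply (auto simp: goodl_def)[1] apply (auto simp: goodl_def)[1] by (simp add: Fd_def rk_def, blast?)
next
  assume "\<not> q 0 1" "q 1 2" "q 0 2"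
  then show ?thesis apply - apply (rule core_case[of "[2,0,1]" "[0,1,2]"]) apply (auto simp: goodl_def)[1] apply (auto simp: goodl_def)[1] by (simp add: Fd_def rk_def, blast?)
next
  assume "\<not> q 0 1" "q 1 2" "\<not> q 0 2"
  then show ?thesis apply - apply (rule core_case[of "[1,0,2]" "[2,1,0]"]) apply (auto simp: goodl_def)[1] apply (auto simp: goodl_def)[1] by (simp add: Fd_def rk_def, blast?)
next
  assume "\<not> q 0 1" "\<not> q 1 2" "q 0 2"
  then show ?thesis apply - apply (rule core_case[of "[0,1,2]" "[2,1,0]"]) apply (auto simp: goodl_def)[1] apply (auto simp: goodl_def)[1] by (simp add: Fd_def rk_def, blast?)
next
  assume "\<not> q 0 1" "\<not> q 1 2" "\<not> q 0 2"
  then show ?thesis apply - apply (rule core_case[of "[1,2,0]" "[2,0,1]"]) apply (auto simp: goodl_def)[1] apply (auto simp: goodl_def)[1] by (simp add: Fd_def rk_def, blast?)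
qed



definition pref :: "nat \<Rightarrow> nat \<Rightarrow> nat \<Rightarrow> bool" where "pref p x y = (x = p \<and> y \<noteq> p)"
definition o2 :: "nat \<Rightarrow> nat \<Rightarrow> nat \<Rightarrow> nat" where
  "o2 x y = (\<lambda>j. if j = 0 then x else if j = 1 then y else 0)"
definition net1 :: "nat \<Rightarrow> nat \<Rightarrow> nat \<Rightarrow> cpnet" where
  "net1 c d f = (\<lambda>i. if i = 1 then {0} else {},
     \<lambda>i \<gamma>. if i = 0 then pref c else if i = 1 then pref (if \<gamma> 0 = 0 then d else f) else pref 0)"
definition net2 :: "nat \<Rightarrow> nat \<Rightarrow> nat \<Rightarrow> cpnet" where
  "net2 c e d = (\<lambda>i. if i = 0 then {1} else {},
     \<lambda>i \<gamma>. if i = 0 then pref (if \<gamma> 1 = 0 then c else e) else if i = 1 then pref d else pref 0)"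

lemma st_pref: "p < 2 \<Longrightarrow> strict_total_on {0..<2} (pref p)"
  unfolding strict_total_on_def pref_def by auto

lemma P_net1_0: "P (net1 c d f) 0 a b = pref c (a 0) (b 0)"
  unfolding P_def net1_def by simp
lemma P_net1_1: "P (net1 c d f) 1 a b = pref (if b 0 = 0 then d else f) (a 1) (b 1)"
  unfolding P_def net1_def ctx_def by simp
lemma P_net2_0: "P (net2 c e d) 0 a b = pref (if b 1 = 0 then c else e) (a 0) (b 0)"
  unfolding P_def net2_def ctx_def by simp
lemma P_net2_1: "P (net2 c e d) 1 a b = pref d (a 1) (b 1)"
  unfolding P_def net2_def by simp

lemma acyc1: "acyclic {(0::nat, 1::nat)}"
proof -
  have "acyclic (insert (0::nat, 1::nat) {})" by (simp only: acyclic_insert) (simp add: acyclic_def)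
  then show ?thesis by simp
qed
lemma acyc2: "acyclic {(1::nat, 0::nat)}"
proof -
  have "acyclic (insert (1::nat, 0::nat) {})" by (simp only: acyclic_insert) (simp add: acyclic_def)
  then show ?thesis by simp
qed

lemma net1_ac:
  assumes n: "2 \<le> n" and k: "1 \<le> k" and lt: "c < 2" "d < 2" "f < 2" and df: "d \<noteq> f"
  shows "cpnet_ac n 2 k (net1 c d f)"
proof -
  have e: "{(j, i). i < n \<and> j \<in> (if i = 1 then {0} else {})} = {(0::nat, 1::nat)}" using n by auto
  have s: "strict_total_on {0..<2} (if i = 0 then pref c else if i = 1 then pref (if \<gamma> 0 = 0 then d else f) else pref 0)" for i \<gamma>
    using st_pref lt by auto
  show ?thesis unfolding cpnet_ac_def Let_def net1_def fst_conv snd_conv e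
    apply (intro conjI allI impI ballI)
        apply (use n in auto)[1]
       apply (use k in simp)
      apply (rule acyc1)
     apply (rule s)
    subgoal premises p for i j
    proof -
      have ij: "i = 1 \<and> j = 0" using p by (auto split: if_splits)
      show ?thesis
        apply (rule bexI[of _ "o2 0 0"])
         apply (rule exI[of _ 1])
         apply (rule conjI, simp)
         apply (rule exI[of _ d], rule conjI, simp add: lt)
         apply (rule exI[of _ f], rule conjI, simp add: lt)
         apply (use ij df in \<open>simp add: o2_def ctx_def pref_def\<close>)
        apply (use n in \<open>auto simp: o2_def outcomes_def\<close>)
        done
    qed
    done
qed

lemma net2_ac:
  assumes n: "2 \<le> n" and k: "1 \<le> k" and lt: "c < 2" "e < 2" "d < 2" and ce: "c \<noteq> e"
  shows "cpnet_ac n 2 k (net2 c e d)"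
proof -
  have e: "{(j, i). i < n \<and> j \<in> (if i = 0 then {1} else {})} = {(1::nat, 0::nat)}" using n by auto
  have s: "strict_total_on {0..<2} (if i = 0 then pref (if \<gamma> 1 = 0 then c else e) else if i = 1 then pref d else pref 0)" for i \<gamma>
    using st_pref lt by auto
  show ?thesis unfolding cpnet_ac_def Let_def net2_def fst_conv snd_conv e
    apply (intro conjI allI impI ballI)
        apply (use n in auto)[1]
       apply (use k in simp)
      apply (rule acyc2)
     apply (rule s)
    subgoal premises p for i j
    proof -
      have ij: "i = 0 \<and> j = 1" using p by (auto split: if_splits)
      show ?thesis
        apply (rule bexI[of _ "o2 0 0"])
         apply (rule exI[of _ 1])
         apply (rule conjI, simp)
         apply (rule exI[of _ c], rule conjI, simp add: lt)
         apply (rule exI[of _ e], rule conjI, simp add: lt)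
         apply (use ij ce in \<open>simp add: o2_def ctx_def pref_def\<close>)
        apply (use n in \<open>auto simp: o2_def outcomes_def\<close>)
        done
    qed
    done
qed



lemma o1_out: "1 \<le> n \<Longrightarrow> v < m \<Longrightarrow> o1 v \<in> outcomes n m"
  unfolding outcomes_def o1_def by auto

lemma case3:
  assumes n: "1 \<le> n" and m: "3 \<le> m" and adm: "admissible_swap_space n m X"
    and cl: "\<And>N1 N2. cpnet_ac n m k N1 \<Longrightarrow> cpnet_ac n m k N2 \<Longrightarrow>
       \<exists>N. cpnet_ac n m k N \<and> concept n m X N = concept n m X N1 \<inter> concept n m X N2"
  shows False
proof -
  define q where "q = (\<lambda>x y. (o1 x, o1 y) \<in> X)"
  obtain l1 l2 where g: "goodl l1" "goodl l2" and nc: "\<forall>S. strict_total_on {0..<m} S \<longrightarrow> 3 \<le> m \<longrightarrow>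
     \<not> (Fd q S l1 l2 0 1 \<and> Fd q S l1 l2 1 2 \<and> Fd q S l1 l2 0 2)"
    using core3[where q = q and m = m] by blast
  have ac1: "cpnet_ac n m k (netL l1)" using netL_ac[OF g(1)] .
  have ac2: "cpnet_ac n m k (netL l2)" using netL_ac[OF g(2)] .
  obtain N where acN: "cpnet_ac n m k N" and eq: "concept n m X N = concept n m X (netL l1) \<inter> concept n m X (netL l2)"
    using cl[OF ac1 ac2] by blast
  define S where "S = snd N 0 (ctx (fst N) 0 (o1 0))"
  have n0: "0 < n" using n by simp
  have st: "strict_total_on {0..<m} S" unfolding S_def using ac_Dg(3)[OF acN n0 o1_out[OF n]] m by simp
  have PS: "P N 0 (o1 x) (o1 y) = S x y" for x y
  proof -
    have "ctx (fst N) 0 (o1 y) = ctx (fst N) 0 (o1 0)"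
      by (rule ctx_swap[OF acN n0]) (simp add: o1_def)
    then show ?thesis unfolding P_def S_def by (simp add: o1_def)
  qed
  have F: "Fd q S l1 l2 x y" if xy: "x < 3" "y < 3" "x \<noteq> y" for x y
  proof -
    have oc: "o1 x \<in> outcomes n m" "o1 y \<in> outcomes n m" using o1_out[OF n] xy m by auto
    have d: "o1 x 0 \<noteq> o1 y 0" "\<forall>j. j \<noteq> 0 \<longrightarrow> o1 x j = o1 y j" using xy by (auto simp: o1_def)
    have d': "o1 y 0 \<noteq> o1 x 0" "\<forall>j. j \<noteq> 0 \<longrightarrow> o1 y j = o1 x j" using xy by (auto simp: o1_def)
    show ?thesis
    proof (cases "q x y")
      case True
      then have "(o1 x, o1 y) \<in> X" unfolding q_def .
      from forced[OF acN ac1 ac2 eq oc n0 d this] show ?thesis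
        using True unfolding Fd_def PS P_netL by (simp add: o1_def)
    next
      case False
      then have "(o1 y, o1 x) \<in> X" using X_or[OF adm oc d] unfolding q_def by blast
      from forced[OF acN ac1 ac2 eq oc(2,1) n0 d' this] show ?thesis
        using False unfolding Fd_def PS P_netL by (simp add: o1_def)
    qed
  qed
  show False using nc st m F[of 0 1] F[of 1 2] F[of 0 2] by simp
qed



lemma o2_out: "2 \<le> n \<Longrightarrow> x < 2 \<Longrightarrow> y < 2 \<Longrightarrow> o2 x y \<in> outcomes n 2"
  unfolding outcomes_def o2_def by auto

lemma sw0: "x \<noteq> x' \<Longrightarrow> o2 x y 0 \<noteq> o2 x' y 0" "\<forall>j. j \<noteq> 0 \<longrightarrow> o2 x y j = o2 x' y j"
  unfolding o2_def by auto
lemma sw1: "y \<noteq> y' \<Longrightarrow> o2 x y 1 \<noteq> o2 x y' 1" "\<forall>j. j \<noteq> 1 \<longrightarrow> o2 x y j = o2 x y' j"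
  unfolding o2_def by auto

lemma case2core:
  assumes n: "2 \<le> n" and k: "1 \<le> k" and adm: "admissible_swap_space n 2 X"
    and cl: "\<And>N1 N2. cpnet_ac n 2 k N1 \<Longrightarrow> cpnet_ac n 2 k N2 \<Longrightarrow>
       \<exists>N. cpnet_ac n 2 k N \<and> concept n 2 X N = concept n 2 X N1 \<inter> concept n 2 X N2"
    and lt: "c < 2" "e < 2" "d < 2" "f < 2" and ce: "c \<noteq> e" and df: "d \<noteq> f"
    and X1: "(o2 c 1, o2 e 1) \<in> X" and X2: "(o2 1 d, o2 1 f) \<in> X"
  shows False
proof -
  have ac1: "cpnet_ac n 2 k (net1 c d f)" using net1_ac[OF n k lt(1,3,4) df] .
  have ac2: "cpnet_ac n 2 k (net2 c e d)" using net2_ac[OF n k lt(1,2,3) ce] .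
  obtain N where acN: "cpnet_ac n 2 k N" and eq: "concept n 2 X N = concept n 2 X (net1 c d f) \<inter> concept n 2 X (net2 c e d)"
    using cl[OF ac1 ac2] by blast
  have n0: "0 < n" and n1: "1 < n" using n by auto
  have oc: "\<And>x y. x < 2 \<Longrightarrow> y < 2 \<Longrightarrow> o2 x y \<in> outcomes n 2" using o2_out[OF n] .
  have ec: "e \<noteq> c" using ce by simp
  have c0: "o2 c 0 \<in> outcomes n 2" "o2 e 0 \<in> outcomes n 2" "o2 c 1 \<in> outcomes n 2" "o2 e 1 \<in> outcomes n 2"
    "o2 0 d \<in> outcomes n 2" "o2 0 f \<in> outcomes n 2" "o2 1 d \<in> outcomes n 2" "o2 1 f \<in> outcomes n 2"
    using oc lt by auto
  have fd: "f \<noteq> d" using df by simp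
  have A1: "P N 0 (o2 c 0) (o2 e 0)"
  proof (cases "(o2 c 0, o2 e 0) \<in> X")
    case True
    from forced[OF acN ac1 ac2 eq c0(1) c0(2) n0 sw0(1)[OF ce] sw0(2) True]
    show ?thesis unfolding P_net1_0 P_net2_0 using ce by (simp add: o2_def pref_def)
  next
    case False
    then have Xr: "(o2 e 0, o2 c 0) \<in> X"
      using X_or[OF adm c0(1) c0(2) sw0(1)[OF ce] sw0(2)] by blast
    from forced[OF acN ac1 ac2 eq c0(2) c0(1) n0 sw0(1)[OF ec] sw0(2) Xr]
    have "\<not> P N 0 (o2 e 0) (o2 c 0)" unfolding P_net1_0 P_net2_0 using ce by (simp add: o2_def pref_def)
    then show ?thesis using P_anti[OF acN c0(1) c0(2) n0 sw0(1)[OF ce] sw0(2)] by blast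
  qed
  have A2: "P N 0 (o2 e 1) (o2 c 1)"
  proof -
    from forced[OF acN ac1 ac2 eq c0(3) c0(4) n0 sw0(1)[OF ce] sw0(2) X1]
    have "\<not> P N 0 (o2 c 1) (o2 e 1)" unfolding P_net1_0 P_net2_0 using ce by (simp add: o2_def pref_def)
    then show ?thesis using P_anti[OF acN c0(4) c0(3) n0 sw0(1)[OF ec] sw0(2)] by blast
  qed
  have B1: "P N 1 (o2 0 d) (o2 0 f)"
  proof (cases "(o2 0 d, o2 0 f) \<in> X")
    case True
    from forced[OF acN ac1 ac2 eq c0(5) c0(6) n1 sw1(1)[OF df] sw1(2) True]
    show ?thesis unfolding P_net1_1 P_net2_1 using df by (simp add: o2_def pref_def)
  next
    case False
    then have Xr: "(o2 0 f, o2 0 d) \<in> X"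
      using X_or[OF adm c0(5) c0(6) sw1(1)[OF df] sw1(2)] by simp
    from forced[OF acN ac1 ac2 eq c0(6) c0(5) n1 sw1(1)[OF fd] sw1(2) Xr]
    have "\<not> P N 1 (o2 0 f) (o2 0 d)" unfolding P_net1_1 P_net2_1 using df by (simp add: o2_def pref_def)
    then show ?thesis using P_anti[OF acN c0(5) c0(6) n1 sw1(1)[OF df] sw1(2)] by simp
  qed
  have B2: "P N 1 (o2 1 f) (o2 1 d)"
  proof -
    from forced[OF acN ac1 ac2 eq c0(7) c0(8) n1 sw1(1)[OF df] sw1(2) X2]
    have "\<not> P N 1 (o2 1 d) (o2 1 f)" unfolding P_net1_1 P_net2_1 using df by (simp add: o2_def pref_def)
    then show ?thesis using P_anti[OF acN c0(8) c0(7) n1 sw1(1)[OF fd] sw1(2)] by simp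
  qed
  have Pa0: "1 \<in> fst N 0"
  proof (rule ccontr)
    assume nin: "1 \<notin> fst N 0"
    have "\<forall>j\<in>fst N 0. o2 e 0 j = o2 c 1 j"
    proof
      fix j assume j: "j \<in> fst N 0"
      then have "j \<in> {0..<n} - {0}" by (rule subsetD[OF ac_Dg(1)[OF acN n0]])
      then have "j \<noteq> 0" by simp
      moreover have "j \<noteq> 1" using j nin by metis
      ultimately show "o2 e 0 j = o2 c 1 j" by (simp add: o2_def)
    qed
    then have cx: "ctx (fst N) 0 (o2 e 0) = ctx (fst N) 0 (o2 c 1)" by (rule ctx_eq)
    define S where "S = snd N 0 (ctx (fst N) 0 (o2 e 0))"
    have st: "strict_total_on {0..<2} S" unfolding S_def using ac_Dg(3)[OF acN n0 c0(2)] .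
    have v: "o2 c 0 0 = c" "o2 e 0 0 = e" "o2 c 1 0 = c" "o2 e 1 0 = e" by (simp_all add: o2_def)
    have s1: "S c e" using A1 unfolding P_def S_def v .
    have s2: "S e c" using A2 unfolding P_def S_def v cx .
    have "S c c" using st_trans[OF st lt(1) lt(2) lt(1) s1 s2] .
    then show False using st_irrefl[OF st lt(1)] by blast
  qed
  have Pa1: "0 \<in> fst N 1"
  proof (rule ccontr)
    assume nin: "0 \<notin> fst N 1"
    have "\<forall>j\<in>fst N 1. o2 0 f j = o2 1 d j"
    proof
      fix j assume j: "j \<in> fst N 1"
      then have "j \<in> {0..<n} - {1}" by (rule subsetD[OF ac_Dg(1)[OF acN n1]])
      then have "j \<noteq> 1" by simp
      moreover have "j \<noteq> 0" using j nin by metis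
      ultimately show "o2 0 f j = o2 1 d j" by (simp add: o2_def)
    qed
    then have cx: "ctx (fst N) 1 (o2 0 f) = ctx (fst N) 1 (o2 1 d)" by (rule ctx_eq)
    define S where "S = snd N 1 (ctx (fst N) 1 (o2 0 f))"
    have st: "strict_total_on {0..<2} S" unfolding S_def using ac_Dg(3)[OF acN n1 c0(6)] .
    have v: "o2 0 d 1 = d" "o2 0 f 1 = f" "o2 1 d 1 = d" "o2 1 f 1 = f" by (simp_all add: o2_def)
    have s1: "S d f" using B1 unfolding P_def S_def v .
    have s2: "S f d" using B2 unfolding P_def S_def v cx .
    have "S d d" using st_trans[OF st lt(3) lt(4) lt(3) s1 s2] .
    then show False using st_irrefl[OF st lt(3)] by blast
  qed
  have "(1, 0) \<in> dep (fst N) n" "(0, 1) \<in> dep (fst N) n" using Pa0 Pa1 n0 n1 unfolding dep_def by auto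
  then have "(0::nat, 0::nat) \<in> (dep (fst N) n)\<^sup>+" by (meson r_into_trancl trancl_into_trancl)
  then show False using ac_Dg(2)[OF acN] unfolding acyclic_def by blast
qed

lemma case2:
  assumes n: "2 \<le> n" and k: "1 \<le> k" and adm: "admissible_swap_space n 2 X"
    and cl: "\<And>N1 N2. cpnet_ac n 2 k N1 \<Longrightarrow> cpnet_ac n 2 k N2 \<Longrightarrow>
       \<exists>N. cpnet_ac n 2 k N \<and> concept n 2 X N = concept n 2 X N1 \<inter> concept n 2 X N2"
  shows False
proof -
  have oc: "\<And>x y. x < 2 \<Longrightarrow> y < 2 \<Longrightarrow> o2 x y \<in> outcomes n 2" using o2_out[OF n] .
  obtain c e where ce: "c < 2" "e < 2" "c \<noteq> e" and X1: "(o2 c 1, o2 e 1) \<in> X"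
  proof (cases "(o2 0 1, o2 1 1) \<in> X")
    case True then show ?thesis using that[of 0 1] by simp
  next
    case False
    then have "(o2 1 1, o2 0 1) \<in> X"
      using X_or[OF adm oc[of 0 1] oc[of 1 1] sw0(1)[of 0 1] sw0(2)] by simp
    then show ?thesis using that[of 1 0] by simp
  qed
  obtain d f where df: "d < 2" "f < 2" "d \<noteq> f" and X2: "(o2 1 d, o2 1 f) \<in> X"
  proof (cases "(o2 1 0, o2 1 1) \<in> X")
    case True then show ?thesis using that[of 0 1] by simp
  next
    case False
    then have "(o2 1 1, o2 1 0) \<in> X"
      using X_or[OF adm oc[of 1 0] oc[of 1 1] sw1(1)[of 0 1] sw1(2)] by simp
    then show ?thesis using that[of 1 0] by simp
  qed
  show False using case2core[OF n k adm cl ce(1,2) df(1,2) ce(3) df(3) X1 X2] by blast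
qed


theorem proposition6:
  fixes n m k :: nat and X :: "((nat \<Rightarrow> nat) \<times> (nat \<Rightarrow> nat)) set"
  assumes "n \<ge> 1" and "m \<ge> 2" and "k \<le> n - 1" and "(m, k) \<noteq> (2, 0)"
    and "admissible_swap_space n m X"
  shows "\<not> intersection_closed (class_ac n m k X)"
proof
  assume ic: "intersection_closed (class_ac n m k X)"
  have cl: "\<exists>N. cpnet_ac n m k N \<and> concept n m X N = concept n m X N1 \<inter> concept n m X N2"
    if "cpnet_ac n m k N1" "cpnet_ac n m k N2" for N1 N2
  proof -
    have "concept n m X N1 \<in> class_ac n m k X" "concept n m X N2 \<in> class_ac n m k X"
      unfolding class_ac_def using that by blast+
    then have "concept n m X N1 \<inter> concept n m X N2 \<in> class_ac n m k X"
      using ic unfolding intersection_closed_def by blast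
    then show ?thesis unfolding class_ac_def by blast
  qed
  show False
  proof (cases "m \<ge> 3")
    case True
    show False by (rule case3[OF assms(1) True assms(5) cl])
  next
    case False
    then have m2: "m = 2" using assms(2) by simp
    then have k1: "1 \<le> k" using assms(4) by (cases k) auto
    then have n2: "2 \<le> n" using assms(3) by simp
    show False using case2[OF n2 k1, of X] assms(5) cl unfolding m2 by blast
  qed
qed

end
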